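(* For every nonnegative integer $n$, $$\sum_{k=0}^{\infty}(-1)^k(4k+1)\,\frac{(-2n)_k\,(-n+\tfrac14)_k\,(\tfrac12)_k}{k!\,(n+\tfrac54)_k\,(2n+\tfrac32)_k}=\left(\frac{2^2}{3^3}\right)^n\frac{(\tfrac54)_n^2}{(\tfrac{13}{12})_n(\tfrac{5}{12})_n}.$$ (The sum is finite, since $(-2n)_k=0$ for $k>2n$.)
   Context: $(a)_j=\Gamma(a+j)/\Gamma(a)=a(a+1)\cdots(a+j-1)$ denotes the rising factorial (Pochhammer symbol), with $(a)_0=1$. *)

theory Defs
  imports Complex_Main
begin

end

theory Submission imports Defs begin

definition T :: "real \<Rightarrow> nat \<Rightarrow> real" where
 "T x k = (-1::real) ^ k * (pochhammer (- 2 * x) k * pochhammer (- x + 1/4) k * pochhammer (1/2) k)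
          / (fact k * pochhammer (x + 5/4) k * pochhammer (2 * x + 3/2) k)"

lemma T0[simp]: "T x 0 = 1" by (simp add: T_def)

lemma gen_step:
  fixes A B C D E F a b c d e m s :: real
  assumes "F\<noteq>0" "D\<noteq>0" "E\<noteq>0" "m\<noteq>0" "d\<noteq>0" "e\<noteq>0"
  shows "(- s)*(A*a*(B*b)*(C*c))/((m*F)*(D*d)*(E*e)) * (m*d*e) = -(s*(A*B*C)/(F*D*E)) * (a*b*c)"
  using assms by (simp add: field_simps)

lemma Tstep:
  fixes y :: real assumes "y \<ge> 0"
  shows "T y (Suc j) * ((1 + real j) * (y + 5/4 + real j) * (2*y+3/2+real j))
      = - T y j * ((- 2 * y + real j) * (- y + 1/4 + real j) * (1/2 + real j))"
proof -
  have p1: "pochhammer (y + 5/4) j \<noteq> 0" using pochhammer_pos[of "y+5/4" j] assms by auto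
  have p2: "pochhammer (2*y + 3/2) j \<noteq> 0" using pochhammer_pos[of "2*y+3/2" j] assms by auto
  have f: "(fact j :: real) \<noteq> 0" by simp
  have m: "1 + real j \<noteq> 0" by simp
  have d: "y + 5/4 + real j \<noteq> 0" "2*y+3/2+real j \<noteq> 0" using assms by auto
  show ?thesis
    unfolding T_def pochhammer_Suc fact_Suc power_Suc mult_minus1 of_nat_Suc
    by (rule gen_step[OF f p1 p2 m d])
qed

lemma Tshift:
  fixes x :: real assumes x: "x \<ge> 0"
  shows "T x (Suc j) * ((2*x+2)*(2*x+1)*(4*x+3)^2*(4*x+5)^2*(real j+1))
       = T (x+1) j * ((real j-2*x-2)*(real j-2*x-1)*(real j-2*x)*(4*real j-4*x-3)*(4*real j-4*x+1)*(2*real j+1)*(2*real j+4*x+5))"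
proof (induction j)
  case 0
  have "T x (Suc 0) * ((1 + real 0) * (x + 5/4 + real 0) * (2*x+3/2+real 0))
      = - T x 0 * ((- 2 * x + real 0) * (- x + 1/4 + real 0) * (1/2 + real 0))"
    using Tstep[OF x, of 0] .
  hence h: "T x 1 * ((x + 5/4) * (2*x+3/2)) = - ((- 2 * x) * (- x + 1/4) * (1/2))" by simp
  show ?case using h by simp algebra
next
  case (Suc j)
  let ?j = "real j"
  have A: "T x (Suc (Suc j)) * ((1 + real (Suc j)) * (x + 5/4 + real (Suc j)) * (2*x+3/2+real (Suc j)))
      = - T x (Suc j) * ((- 2 * x + real (Suc j)) * (- x + 1/4 + real (Suc j)) * (1/2 + real (Suc j)))"
    using Tstep[OF x, of "Suc j"] .
  have x1: "x + 1 \<ge> 0" using x by simp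
  have B: "T (x+1) (Suc j) * ((1 + ?j) * ((x+1) + 5/4 + ?j) * (2*(x+1)+3/2+?j))
      = - T (x+1) j * ((- 2 * (x+1) + ?j) * (- (x+1) + 1/4 + ?j) * (1/2 + ?j))"
    using Tstep[OF x1, of j] .
  have nz: "((1 + real (Suc j)) * (x + 5/4 + real (Suc j)) * (2*x+3/2+real (Suc j)))
     * ((1 + ?j) * ((x+1) + 5/4 + ?j) * (2*(x+1)+3/2+?j)) * ((2*x+2)*(2*x+1)*(4*x+3)^2*(4*x+5)^2*(?j+1)) \<noteq> 0"
    using x by (auto simp: add_nonneg_eq_0_iff)
  have "((1 + real (Suc j)) * (x + 5/4 + real (Suc j)) * (2*x+3/2+real (Suc j)))
     * ((1 + ?j) * ((x+1) + 5/4 + ?j) * (2*(x+1)+3/2+?j)) * ((2*x+2)*(2*x+1)*(4*x+3)^2*(4*x+5)^2*(?j+1)) *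
     (T x (Suc (Suc j)) * ((2*x+2)*(2*x+1)*(4*x+3)^2*(4*x+5)^2*(real (Suc j)+1)))
     = ((1 + real (Suc j)) * (x + 5/4 + real (Suc j)) * (2*x+3/2+real (Suc j)))
     * ((1 + ?j) * ((x+1) + 5/4 + ?j) * (2*(x+1)+3/2+?j)) * ((2*x+2)*(2*x+1)*(4*x+3)^2*(4*x+5)^2*(?j+1)) *
     (T (x+1) (Suc j) * ((real (Suc j)-2*x-2)*(real (Suc j)-2*x-1)*(real (Suc j)-2*x)*(4*real (Suc j)-4*x-3)*(4*real (Suc j)-4*x+1)*(2*real (Suc j)+1)*(2*real (Suc j)+4*x+5)))"
    using A B Suc.IH unfolding of_nat_Suc by algebra
  thus ?case using nz by simp
qed

definition Qp :: "real \<Rightarrow> real \<Rightarrow> real" where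
 "Qp x k = - 17262 - 140904 * x ^ 1 - 452600 * x ^ 2 - 733056 * x ^ 3 - 631552 * x ^ 4 - 274432 * x ^ 5 - 47104 * x ^ 6 + 44178 * k ^ 1 + 374292 * x ^ 1 * k ^ 1 + 1203632 * x ^ 2 * k ^ 1 + 1899392 * x ^ 3 * k ^ 1 + 1551360 * x ^ 4 * k ^ 1 + 619520 * x ^ 5 * k ^ 1 + 94208 * x ^ 6 * k ^ 1 - 5944 * k ^ 2 - 137688 * x ^ 1 * k ^ 2 - 551104 * x ^ 2 * k ^ 2 - 868352 * x ^ 3 * k ^ 2 - 588800 * x ^ 4 * k ^ 2 - 141312 * x ^ 5 * k ^ 2 - 35360 * k ^ 3 - 133952 * x ^ 1 * k ^ 3 - 140800 * x ^ 2 * k ^ 3 - 13312 * x ^ 3 * k ^ 3 + 24576 * x ^ 4 * k ^ 3 + 14288 * k ^ 4 + 80832 * x ^ 1 * k ^ 4 + 103168 * x ^ 2 * k ^ 4 + 33792 * x ^ 3 * k ^ 4 + 8896 * k ^ 5 - 2560 * x ^ 1 * k ^ 5 - 9216 * x ^ 2 * k ^ 5 - 6400 * k ^ 6 - 3072 * x ^ 1 * k ^ 6 + 1024 * k ^ 7"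

lemma poly_id:
  fixes x j :: real
  shows "(4*j+5)*(-((j-2*x-2)*(4*j-4*x-3)*(2*j+1)))*12*(x+1)*(2*x+1)*(12*x+13)*(12*x+5)*(4*x+3)^2
     - 8*(4*j+5)*((j-2*x-2)*(j-2*x-1)*(j-2*x)*(4*j-4*x-3)*(4*j-4*x+1)*(2*j+1)*(2*j+4*x+5))*(4*j+4*x+9)*(2*j+4*x+7)
   = -((j-2*x-2)*(4*j-4*x-3)*(2*j+1)) * Qp x (j+2) - (j+1)*(4*j+4*x+9)*(2*j+4*x+7) * Qp x (j+1)"
  unfolding Qp_def by algebra


definition cc :: "real \<Rightarrow> real" where "cc x = 12*(x+1)*(2*x+1)*(12*x+13)*(12*x+5)*(4*x+3)^2"
definition qq :: "real \<Rightarrow> real" where "qq x = 3*(12*x+13)*(12*x+5)"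
definition Fx :: "real \<Rightarrow> nat \<Rightarrow> real" where "Fx x k = (4 * real k + 1) * T x k"
definition hh :: "real \<Rightarrow> nat \<Rightarrow> real" where
  "hh x k = (if k = 0 then 0 else T (x+1) (k-1) * Qp x (real k))"

lemma hh_Suc: "hh x (Suc k) = T (x+1) k * Qp x (real k + 1)"
  by (simp add: hh_def add.commute)

lemma pointwise:
  fixes x :: real assumes x: "x \<ge> 0"
  shows "cc x * qq x * Fx (x+1) k - 4 * cc x * (4*x+5)^2 * Fx x k = qq x * (hh x (Suc k) - hh x k)"
proof (cases k)
  case 0
  show ?thesis unfolding 0 hh_Suc Fx_def cc_def qq_def Qp_def by (simp add: hh_def) algebra
next
  case (Suc j)
  let ?j = "real j"
  have x1: "x + 1 \<ge> 0" using x by simp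
  have B: "T (x+1) (Suc j) * ((1 + ?j) * ((x+1) + 5/4 + ?j) * (2*(x+1)+3/2+?j))
      = - T (x+1) j * ((- 2 * (x+1) + ?j) * (- (x+1) + 1/4 + ?j) * (1/2 + ?j))"
    using Tstep[OF x1, of j] .
  have C: "T x (Suc j) * ((2*x+2)*(2*x+1)*(4*x+3)^2*(4*x+5)^2*(?j+1))
       = T (x+1) j * ((?j-2*x-2)*(?j-2*x-1)*(?j-2*x)*(4*?j-4*x-3)*(4*?j-4*x+1)*(2*?j+1)*(2*?j+4*x+5))"
    using Tshift[OF x, of j] .
  have P: "(4*?j+5)*(-((?j-2*x-2)*(4*?j-4*x-3)*(2*?j+1)))*12*(x+1)*(2*x+1)*(12*x+13)*(12*x+5)*(4*x+3)^2
     - 8*(4*?j+5)*((?j-2*x-2)*(?j-2*x-1)*(?j-2*x)*(4*?j-4*x-3)*(4*?j-4*x+1)*(2*?j+1)*(2*?j+4*x+5))*(4*?j+4*x+9)*(2*?j+4*x+7)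
   = -((?j-2*x-2)*(4*?j-4*x-3)*(2*?j+1)) * Qp x (?j+2) - (?j+1)*(4*?j+4*x+9)*(2*?j+4*x+7) * Qp x (?j+1)"
    using poly_id[of ?j x] .
  have e: "real (Suc j) + 1 = ?j + 2" by simp
  have e2: "4 * real (Suc j) + 1 = 4*(?j+1)+1" by simp
  define D1 where "D1 = (1 + ?j) * ((x+1) + 5/4 + ?j) * (2*(x+1)+3/2+?j)"
  define N1 where "N1 = (- 2 * (x+1) + ?j) * (- (x+1) + 1/4 + ?j) * (1/2 + ?j)"
  define E where "E = (2*x+2)*(2*x+1)*(4*x+3)^2*(4*x+5)^2*(?j+1)"
  define S where "S = (?j-2*x-2)*(?j-2*x-1)*(?j-2*x)*(4*?j-4*x-3)*(4*?j-4*x+1)*(2*?j+1)*(2*?j+4*x+5)"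
  have B': "(T (x+1) (Suc j)) * D1 = - (T (x+1) j) * N1" using B unfolding D1_def N1_def .
  have C': "(T x (Suc j)) * E = (T (x+1) j) * S" using C unfolding E_def S_def .
  define PD where "PD = (4*?j+5)*(-((?j-2*x-2)*(4*?j-4*x-3)*(2*?j+1)))*12*(x+1)*(2*x+1)*(12*x+13)*(12*x+5)*(4*x+3)^2
     - 8*(4*?j+5)*S*(4*?j+4*x+9)*(2*?j+4*x+7)
   - (-((?j-2*x-2)*(4*?j-4*x-3)*(2*?j+1)) * (Qp x (?j+2)) - (?j+1)*(4*?j+4*x+9)*(2*?j+4*x+7) * (Qp x (?j+1)))"
  have P': "PD = 0" unfolding PD_def S_def right_minus_eq by (rule P)
  let ?L = "cc x * qq x * ((4 * (?j+1) + 1) * (T (x+1) (Suc j))) - 4 * cc x * (4*x+5)^2 * ((4 * (?j+1) + 1) * (T x (Suc j)))"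
  let ?R = "qq x * ((T (x+1) (Suc j)) * (Qp x (?j+2)) - (T (x+1) j) * (Qp x (?j+1)))"
  have "D1 * E * (?L - ?R) = E*(cc x * qq x * (4*?j+5) - qq x * (Qp x (?j+2)))*((T (x+1) (Suc j))*D1) - 4 * cc x * (4*x+5)^2 * (4*?j+5) * D1 * ((T x (Suc j))*E)
        + qq x * D1 * E * (T (x+1) j) * (Qp x (?j+1))"
    by algebra
  also have "\<dots> = E*(cc x * qq x * (4*?j+5) - qq x * (Qp x (?j+2)))*(- (T (x+1) j) * N1) - 4 * cc x * (4*x+5)^2 * (4*?j+5) * D1 * ((T (x+1) j) * S)
        + qq x * D1 * E * (T (x+1) j) * (Qp x (?j+1))" unfolding B' C' ..
  also have "\<dots> = (T (x+1) j) * (E * qq x / 8) * PD"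
    unfolding cc_def qq_def D1_def N1_def E_def PD_def by algebra
  also have "\<dots> = 0" by (simp add: P')
  finally have "D1 * E * (?L - ?R) = 0" .
  moreover have "D1 * E \<noteq> 0" unfolding D1_def E_def using x by (auto simp: add_nonneg_eq_0_iff)
  ultimately have "?L = ?R" by simp
  hence "cc x * qq x * ((4 * (?j+1) + 1) * T (x+1) (Suc j)) - 4 * cc x * (4*x+5)^2 * ((4 * (?j+1) + 1) * T x (Suc j))
     = qq x * (T (x+1) (Suc j) * Qp x (?j+2) - T (x+1) j * Qp x (?j+1))" .

  thus ?thesis unfolding Suc hh_Suc Fx_def e2 e .
qed

lemma T_vanish:
  assumes "2*n < m" shows "T (real n) m = 0"
proof -
  have "pochhammer (- 2 * real n) m = pochhammer (- of_nat (2*n)) m" by simp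
  also have "\<dots> = 0" using assms by (simp only: pochhammer_of_nat_eq_0_iff)
  finally show ?thesis by (simp add: T_def)
qed

lemma T_vanish1:
  assumes "2*n+2 < m" shows "T (real n + 1) m = 0"
proof -
  have e: "- 2 * (real n + 1) = - of_nat (2*n+2)" by simp
  have z: "pochhammer (- of_nat (2*n+2)) m = (0::real)" using assms pochhammer_of_nat_eq_0_iff by blast
  show ?thesis unfolding T_def e z by (simp only: mult_zero_left mult_zero_right div_0)
qed

lemma trunc:
  assumes "2*n+1 \<le> M"
  shows "(\<Sum>k<M. Fx (real n) k) = (\<Sum>k<2*n+1. Fx (real n) k)"
  using assms
proof (induction M rule: dec_induct)
  case base then show ?case by simp
next
  case (step M)
  have "Fx (real n) M = 0" using step.hyps T_vanish[of n M] by (simp add: Fx_def)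
  then show ?case using step.IH by simp
qed

definition RR :: "nat \<Rightarrow> real" where
  "RR n = (4 / 27) ^ n * (pochhammer (5/4) n) ^ 2 / (pochhammer (13/12) n * pochhammer (5/12) n)"

lemma gen_RR:
  fixes p q A B C a b c :: real
  assumes "B \<noteq> 0" "C \<noteq> 0" "b \<noteq> 0" "c \<noteq> 0"
  shows "q*p*(A*a)^2/((B*b)*(C*c)) = (q*a^2/(b*c)) * (p*A^2/(B*C))"
  using assms by (simp add: field_simps power2_eq_square)

lemma gen_R2:
  fixes X Y Z :: real assumes "Y \<noteq> 0" "Z \<noteq> 0"
  shows "4/27*(X/4)^2/((Y/12)*(Z/12)) = 4*X^2/(3*Y*Z)"
  using assms by (simp add: field_simps power2_eq_square)

lemma RR_Suc: "RR (Suc n) = 4*(4*real n+5)^2/(3*(12*real n+13)*(12*real n+5)) * RR n"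
proof -
  have a: "pochhammer (13/12) n \<noteq> (0::real)" "pochhammer (5/12) n \<noteq> (0::real)"
    using pochhammer_pos[of "13/12::real" n] pochhammer_pos[of "5/12::real" n] by auto
  have b: "13/12 + real n \<noteq> 0" "5/12 + real n \<noteq> 0" by (simp_all add: add_pos_nonneg[THEN less_imp_neq, symmetric])
  have "RR (Suc n) = (4/27)*(5/4 + real n)^2/((13/12 + real n)*(5/12 + real n)) * RR n"
    unfolding RR_def pochhammer_Suc power_Suc by (rule gen_RR[OF a b])
  also have "(4/27)*(5/4 + real n)^2/((13/12 + real n)*(5/12 + real n)) = 4*(4*real n+5)^2/(3*(12*real n+13)*(12*real n+5))"
  proof -
    have e: "5/4 + real n = (4*real n+5)/4" "13/12 + real n = (12*real n+13)/12" "5/12 + real n = (12*real n+5)/12"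
      by simp_all
    have nz: "12*real n+13 \<noteq> 0" "12*real n+5 \<noteq> 0" by (simp_all add: add_pos_nonneg[THEN less_imp_neq, symmetric])
    show ?thesis unfolding e by (rule gen_R2[OF nz])
  qed
  finally show ?thesis .
qed

lemma gen_cancel:
  fixes c q A B k :: real
  assumes "c \<noteq> 0" "q \<noteq> 0" "c * q * A = 4 * c * k * B"
  shows "A = 4 * k / q * B"
proof -
  have "q * A = 4 * k * B" using assms(1,3) by (simp add: mult.assoc mult.left_commute[of c])
  thus ?thesis using assms(2) by (simp add: field_simps)
qed

lemma main_sum: "(\<Sum>k<2*n+1. Fx (real n) k) = RR n"
proof (induction n)
  case 0
  show ?case by (simp add: Fx_def RR_def)
next
  case (Suc n)
  let ?x = "real n"
  have x: "?x \<ge> 0" by simp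
  have tel: "(\<Sum>k<2*n+4. cc ?x * qq ?x * Fx (?x+1) k - 4 * cc ?x * (4*?x+5)^2 * Fx ?x k)
      = qq ?x * (hh ?x (2*n+4) - hh ?x 0)"
  proof -
    have "(\<Sum>k<2*n+4. cc ?x * qq ?x * Fx (?x+1) k - 4 * cc ?x * (4*?x+5)^2 * Fx ?x k)
       = (\<Sum>k<2*n+4. qq ?x * (hh ?x (Suc k) - hh ?x k))"
      by (rule sum.cong) (simp_all add: pointwise[OF x])
    also have "\<dots> = qq ?x * (\<Sum>k<2*n+4. hh ?x (Suc k) - hh ?x k)" by (simp only: sum_distrib_left)
    also have "\<dots> = qq ?x * (hh ?x (2*n+4) - hh ?x 0)" by (simp only: sum_lessThan_telescope)
    finally show ?thesis .
  qed
  have tv: "T (?x+1) (2*n+3) = 0" by (rule T_vanish1) simp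
  have eq4: "2*n+4 = Suc (2*n+3)" by simp
  have hz: "hh ?x (2*n+4) = 0" unfolding eq4 hh_Suc tv by simp
  have h0: "hh ?x 0 = 0" by (simp add: hh_def)
  have tel1: "cc ?x * qq ?x * (\<Sum>k<2*n+4. Fx (?x+1) k) - 4 * cc ?x * (4*?x+5)^2 * (\<Sum>k<2*n+4. Fx ?x k) = 0"
    using tel[unfolded hz h0] by (simp add: sum_subtractf sum_distrib_left)
  hence tel2: "cc ?x * qq ?x * (\<Sum>k<2*n+4. Fx (?x+1) k) = 4 * cc ?x * (4*?x+5)^2 * (\<Sum>k<2*n+4. Fx ?x k)"
    by simp
  have s1: "(\<Sum>k<2*n+4. Fx ?x k) = RR n" using trunc[of n "2*n+4"] Suc.IH by simp
  have s2: "(\<Sum>k<2*n+4. Fx (?x+1) k) = (\<Sum>k<2*Suc n+1. Fx (real (Suc n)) k)"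
    using trunc[of "Suc n" "2*n+4"] by (simp add: add.commute)
  have nz: "cc ?x \<noteq> 0" "qq ?x \<noteq> 0" unfolding cc_def qq_def by (auto simp: add_nonneg_eq_0_iff)
  have "(\<Sum>k<2*Suc n+1. Fx (real (Suc n)) k) = 4*(4*?x+5)^2/(3*(12*?x+13)*(12*?x+5)) * RR n"
  proof -
    have "(\<Sum>k<2*n+4. Fx (?x+1) k) = 4*(4*?x+5)^2/qq ?x * RR n"
      using gen_cancel[OF nz tel2[unfolded s1]] .
    thus ?thesis unfolding s2 qq_def by simp
  qed
  thus ?case using RR_Suc by simp
qed

theorem theorem3:
  fixes n :: nat
  shows "(\<Sum>k. (-1::real) ^ k * (4 * real k + 1) *
            (pochhammer (- 2 * real n) k * pochhammer (- real n + 1/4) k * pochhammer (1/2) k)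
          / (fact k * pochhammer (real n + 5/4) k * pochhammer (2 * real n + 3/2) k))
       = (4 / 27) ^ n * (pochhammer (5/4) n) ^ 2
          / (pochhammer (13/12) n * pochhammer (5/12) n)"
proof -
  have eq: "\<And>k. (-1::real) ^ k * (4 * real k + 1) *
            (pochhammer (- 2 * real n) k * pochhammer (- real n + 1/4) k * pochhammer (1/2) k)
          / (fact k * pochhammer (real n + 5/4) k * pochhammer (2 * real n + 3/2) k) = Fx (real n) k"
    by (simp add: Fx_def T_def)
  have "(\<Sum>k. Fx (real n) k) = (\<Sum>k\<in>{..<2*n+1}. Fx (real n) k)"
    by (rule suminf_finite) (auto simp: Fx_def T_vanish)
  thus ?thesis unfolding eq main_sum RR_def .
qed

end
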